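(* Let $(u,v),(u',v')\in\mathcal A$ and let $t,j,k\in\mathbb Z$ with $1\le t<k$, $u'\le u$ and $j\le -u$. Then (i) $d(k;u+j,v,u'+j,v')=d(k;u,v,u',v')$; (ii) $d(k;0,1,u',v')=d(k;0,v',u'-v'+1,1)$; (iii) $d(k;u,v,u',v')=d(k-t;u,v+t,u',v')$; (iv) if moreover $u'<0$, then $d(k;0,1,u',1)=\binom{-2u'-k}{-u'-k+1}\dfrac{k-1}{-u'}$.
   Context: Binomial coefficients $\binom{a}{b}$ with $a\ge0$ are $0$ when $b<0$ or $b>a$. Let $\mathcal A=\{(\ell,r)\in\mathbb Z^2:\ell\le 0,\ r\ge 1\}$. For $(u,v),(u',v')\in\mathcal A$ and $k\in\mathbb Z$, $\mathcal D(k;u,v,u',v')$ is the set of lattice paths from $(u,v)$ to $(u',v')$, all of whose points lie in $\mathcal A$, using only steps $\mathsf U=(0,1)$ and $\mathsf D=(-1,-1)$, which contain exactly $k$ lattice points (counting start and end) on the line $\{(\ell,1):\ell\le 0\}$; and $d(k;u,v,u',v')=|\mathcal D(k;u,v,u',v')|$. *)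

theory Defs
  imports Complex_Main
begin

definition inA :: "int \<times> int \<Rightarrow> bool" where
  "inA p \<longleftrightarrow> fst p \<le> 0 \<and> snd p \<ge> 1"

text \<open>Steps: True = U = (0,1), False = D = (-1,-1).\<close>
definition step :: "bool \<Rightarrow> int \<times> int \<Rightarrow> int \<times> int" where
  "step s p = (if s then (fst p, snd p + 1) else (fst p - 1, snd p - 1))"

fun pts :: "int \<times> int \<Rightarrow> bool list \<Rightarrow> (int \<times> int) list" where
  "pts p [] = [p]"
| "pts p (s # ss) = p # pts (step s p) ss"

definition Dpaths :: "int \<Rightarrow> int \<Rightarrow> int \<Rightarrow> int \<Rightarrow> int \<Rightarrow> bool list set" where
  "Dpaths k u v u' v' =
     {ss. last (pts (u, v) ss) = (u', v')
        \<and> (\<forall>q \<in> set (pts (u, v) ss). inA q)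
        \<and> int (length (filter (\<lambda>q. snd q = 1) (pts (u, v) ss))) = k}"

definition dcount :: "int \<Rightarrow> int \<Rightarrow> int \<Rightarrow> int \<Rightarrow> int \<Rightarrow> nat" where
  "dcount k u v u' v' = card (Dpaths k u v u' v')"

definition ibinom :: "int \<Rightarrow> int \<Rightarrow> nat" where
  "ibinom a b = (if 0 \<le> b \<and> b \<le> a then nat a choose nat b else 0)"

end

theory Submission imports Defs begin

fun rw :: "int \<Rightarrow> bool list \<Rightarrow> int list" where
  "rw v [] = [v]"
| "rw v (s # ss) = v # rw (if s then v + 1 else v - 1) ss"

lemma rw_ne[simp]: "rw v ss \<noteq> []"
  by (cases ss) auto

lemma rw_hd: "v \<in> set (rw v ss)"
  by (cases ss) auto

lemma rw_last: "last (rw v ss) = v + int (length ss) - 2 * int (length (filter Not ss))"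
  by (induction ss arbitrary: v) auto

lemma rw_snoc: "rw v (ss @ [s]) = rw v ss @ [if s then last (rw v ss) + 1 else last (rw v ss) - 1]"
  by (induction ss arbitrary: v) auto

lemma rw_rev: "rw (last (rw v ss)) (rev (map Not ss)) = rev (rw v ss)"
proof (induction ss rule: rev_induct)
  case Nil then show ?case by simp
next
  case (snoc s ss)
  then show ?case by (simp add: rw_snoc)
qed

definition E :: "int \<Rightarrow> int \<Rightarrow> int \<Rightarrow> int \<Rightarrow> bool list set" where
  "E k m v w = {ss. int (length (filter Not ss)) = m \<and> last (rw v ss) = w
     \<and> (\<forall>x\<in>set (rw v ss). 1 \<le> x) \<and> int (length (filter (\<lambda>x. x = 1) (rw v ss))) = k}"

lemma E_len: "ss \<in> E k m v w \<Longrightarrow> int (length ss) = w - v + 2 * m"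
  unfolding E_def using rw_last[of v ss] by auto

lemma E_finite: "finite (E k m v w)"
proof -
  have "E k m v w \<subseteq> {xs. set xs \<subseteq> UNIV \<and> length xs = nat (w - v + 2 * m)}"
    using E_len by fastforce
  moreover have "finite {xs. set xs \<subseteq> (UNIV::bool set) \<and> length xs = nat (w - v + 2 * m)}"
    by (rule finite_lists_length_eq) simp
  ultimately show ?thesis by (rule finite_subset)
qed

lemma pts_snd: "map snd (pts (u, v) ss) = rw v ss"
  by (induction ss arbitrary: u v) (auto simp: step_def)

lemma pts_fst: "\<forall>q\<in>set (pts (u, v) ss). fst q \<le> u"
proof (induction ss arbitrary: u v)
  case Nil then show ?case by simp
next
  case (Cons s ss)
  have "\<forall>q\<in>set (pts (step s (u,v)) ss). fst q \<le> u"
    using Cons[of "fst (step s (u,v))" "snd (step s (u,v))"] by (auto simp: step_def; fastforce)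
  then show ?case by simp
qed

lemma pts_last_fst: "fst (last (pts (u, v) ss)) = u - int (length (filter Not ss))"
proof (induction ss arbitrary: u v)
  case Nil then show ?case by simp
next
  case (Cons s ss)
  have ne: "pts p ss \<noteq> []" for p by (cases ss) auto
  show ?case using Cons[of "fst (step s (u,v))" "snd (step s (u,v))"] ne
    by (auto simp: step_def)
qed

lemma pts_ne: "pts p ss \<noteq> []" by (cases ss) auto

lemma Dpaths_eq:
  assumes "u \<le> 0"
  shows "Dpaths k u v u' v' = E k (u - u') v v'"
proof (rule set_eqI)
  fix ss
  let ?P = "pts (u, v) ss"
  have sndl: "snd (last ?P) = last (rw v ss)"
    using pts_snd[of u v ss] pts_ne last_map[of ?P snd] by metis
  have setr: "set (rw v ss) = snd ` set ?P" using pts_snd[of u v ss] by (metis set_map)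
  have c: "length (filter (\<lambda>q. snd q = 1) ?P) = length (filter (\<lambda>x. x = 1) (rw v ss))"
  proof -
    have "length (filter (\<lambda>q. snd q = 1) ?P) = length (filter (\<lambda>x. x = 1) (map snd ?P))"
      by (simp add: filter_map comp_def)
    then show ?thesis by (simp only: pts_snd)
  qed
  have l: "last ?P = (u', v') \<longleftrightarrow> u - int (length (filter Not ss)) = u' \<and> last (rw v ss) = v'"
  proof -
    have "last ?P = (u', v') \<longleftrightarrow> fst (last ?P) = u' \<and> snd (last ?P) = v'"
      by (cases "last ?P") auto
    then show ?thesis using pts_last_fst[of u v ss] sndl by simp
  qed
  have a: "(\<forall>q\<in>set ?P. inA q) \<longleftrightarrow> (\<forall>x\<in>set (rw v ss). 1 \<le> x)"
    using pts_fst[of u v ss] assms setr unfolding inA_def by fastforce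
  show "ss \<in> Dpaths k u v u' v' \<longleftrightarrow> ss \<in> E k (u - u') v v'"
    unfolding Dpaths_def E_def using l a c by auto
qed


lemma flip_flip: "rev (map Not (rev (map Not ss))) = ss"
  by (simp add: rev_map comp_def)

lemma E_rev:
  assumes "ss \<in> E k m a b"
  shows "rev (map Not ss) \<in> E k (b - a + m) b a"
proof -
  have len: "int (length ss) = b - a + 2 * m" using E_len[OF assms] .
  have e: "int (length (filter Not ss)) = m" and l: "last (rw a ss) = b"
    and p: "\<forall>x\<in>set (rw a ss). 1 \<le> x" and c: "int (length (filter (\<lambda>x. x = 1) (rw a ss))) = k"
    using assms unfolding E_def by auto
  have r: "rw b (rev (map Not ss)) = rev (rw a ss)" using rw_rev[of a ss] l by simp
  have "length (filter Not (rev (map Not ss))) = length (filter (\<lambda>x. x) ss)"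
    by (simp add: filter_map comp_def rev_filter[symmetric])
  moreover have "length (filter (\<lambda>x. x) ss) + length (filter Not ss) = length ss"
    using sum_length_filter_compl[of "\<lambda>x. x" ss] by simp
  ultimately have n: "int (length (filter Not (rev (map Not ss)))) = b - a + m"
    using len e by linarith
  have "last (rev (rw a ss)) = a" by (cases ss) (auto simp: last_rev)
  then show ?thesis unfolding E_def using r n p c by (simp add: rev_filter[symmetric])
qed

lemma E_rev_card: "card (E k m a b) = card (E k (b - a + m) b a)"
proof (rule antisym)
  have inj: "inj_on (\<lambda>ss. rev (map Not ss)) X" for X
    by (metis (mono_tags, lifting) flip_flip inj_onI)
  show "card (E k m a b) \<le> card (E k (b - a + m) b a)"
    by (rule card_inj_on_le[OF inj _ E_finite]) (auto intro: E_rev)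
  show "card (E k (b - a + m) b a) \<le> card (E k m a b)"
  proof (rule card_inj_on_le[OF inj _ E_finite])
    show "(\<lambda>ss. rev (map Not ss)) ` E k (b - a + m) b a \<subseteq> E k m a b"
      using E_rev[of _ k "b - a + m" b a] by auto
  qed
qed

lemma E_split:
  assumes "1 \<le> v"
  shows "E k m v w = ({ss. ss = [] \<and> m = 0 \<and> v = w \<and> k = (if v = 1 then 1 else 0)})
     \<union> (Cons True ` E (k - (if v = 1 then 1 else 0)) m (v + 1) w
        \<union> Cons False ` E (k - (if v = 1 then 1 else 0)) (m - 1) (v - 1) w)"
proof (rule set_eqI)
  fix ss
  show "ss \<in> E k m v w \<longleftrightarrow> ss \<in> ({ss. ss = [] \<and> m = 0 \<and> v = w \<and> k = (if v = 1 then 1 else 0)})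
     \<union> (Cons True ` E (k - (if v = 1 then 1 else 0)) m (v + 1) w
        \<union> Cons False ` E (k - (if v = 1 then 1 else 0)) (m - 1) (v - 1) w)"
  proof (cases ss)
    case Nil then show ?thesis using assms by (auto simp: E_def)
  next
    case (Cons s ss')
    then show ?thesis using assms by (cases s) (auto simp: E_def)
  qed
qed

lemma E_card_split:
  assumes "1 \<le> v"
  shows "card (E k m v w) = (if m = 0 \<and> v = w \<and> k = (if v = 1 then 1 else 0) then 1 else 0)
     + card (E (k - (if v = 1 then 1 else 0)) m (v + 1) w)
     + card (E (k - (if v = 1 then 1 else 0)) (m - 1) (v - 1) w)"
proof -
  let ?c = "(if v = 1 then 1 else 0) :: int"
  let ?A = "{ss::bool list. ss = [] \<and> m = 0 \<and> v = w \<and> k = ?c}"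
  let ?B = "Cons True ` E (k - ?c) m (v + 1) w"
  let ?C = "Cons False ` E (k - ?c) (m - 1) (v - 1) w"
  have fA: "finite ?A" by (rule finite_subset[of _ "{[]}"]) auto
  have cA: "card ?A = (if m = 0 \<and> v = w \<and> k = ?c then 1 else 0)"
  proof (cases "m = 0 \<and> v = w \<and> k = ?c")
    case True then have "?A = {[]}" by auto
    then show ?thesis using True by simp
  next
    case False then have "?A = {}" by auto
    then show ?thesis using False by simp
  qed
  have cB: "card ?B = card (E (k - ?c) m (v + 1) w)" by (rule card_image) simp
  have cC: "card ?C = card (E (k - ?c) (m - 1) (v - 1) w)" by (rule card_image) simp
  have "card (?A \<union> (?B \<union> ?C)) = card ?A + card (?B \<union> ?C)"
  proof -
    have d: "?A \<inter> (?B \<union> ?C) = {}" by blast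
    have f: "finite (?B \<union> ?C)" by (simp add: E_finite)
    show ?thesis by (rule card_Un_disjoint[OF fA f d])
  qed
  also have "card (?B \<union> ?C) = card ?B + card ?C"
  proof -
    have d: "?B \<inter> ?C = {}" by blast
    show ?thesis by (rule card_Un_disjoint[OF _ _ d]) (simp_all add: E_finite)
  qed
  finally show ?thesis using E_split[OF assms, of k m w] cA cB cC by simp
qed

lemma E_low: "v < 1 \<Longrightarrow> E k m v w = {}"
  unfolding E_def using rw_hd[of v] by force

lemma E_len_neg: "w - v + 2 * m < 0 \<Longrightarrow> E k m v w = {}"
  using E_len by fastforce

lemma E_shift1:
  "\<forall>k m v w. 1 \<le> v \<longrightarrow> 2 \<le> k \<longrightarrow> w - v + 2 * m = int n \<longrightarrow>
     card (E k m v w) = card (E (k - 1) m (v + 1) w)"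
proof (induction n)
  case 0
  show ?case
  proof (intro allI impI)
    fix k m v w :: int
    assume a: "1 \<le> v" "2 \<le> k" "w - v + 2 * m = int 0"
    have "E (k - 1) m (v + 1) w = {}" by (rule E_len_neg) (use a in simp)
    moreover have "E k m v w = {}"
    proof -
      have "ss = []" if "ss \<in> E k m v w" for ss using E_len[OF that] a by simp
      moreover have "[] \<notin> E k m v w" using a by (auto simp: E_def)
      ultimately show ?thesis by blast
    qed
    ultimately show "card (E k m v w) = card (E (k - 1) m (v + 1) w)" by simp
  qed
next
  case (Suc n)
  show ?case
  proof (intro allI impI)
    fix k m v w :: int
    assume a: "1 \<le> v" "2 \<le> k" "w - v + 2 * m = int (Suc n)"
    show "card (E k m v w) = card (E (k - 1) m (v + 1) w)"
    proof (cases "v = 1")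
      case True
      then show ?thesis using E_card_split[OF a(1), of k m w] a E_low[of 0] by simp
    next
      case False
      then have v2: "2 \<le> v" using a by simp
      have "card (E k m v w) = card (E k m (v + 1) w) + card (E k (m - 1) (v - 1) w)"
        using E_card_split[OF a(1), of k m w] False a by simp
      also have "card (E k m (v + 1) w) = card (E (k - 1) m (v + 2) w)"
        using Suc.IH[rule_format, of "v + 1" k w m] a by (simp add: add.assoc)
      also have "card (E k (m - 1) (v - 1) w) = card (E (k - 1) (m - 1) v w)"
        using Suc.IH[rule_format, of "v - 1" k w "m - 1"] a v2 by simp
      also have "card (E (k - 1) m (v + 2) w) + card (E (k - 1) (m - 1) v w)
          = card (E (k - 1) m (v + 1) w)"
        using E_card_split[of "v + 1" "k - 1" m w] v2 a by (simp add: add.assoc)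
      finally show ?thesis .
    qed
  qed
qed

lemma E_shift1': "1 \<le> v \<Longrightarrow> 2 \<le> k \<Longrightarrow> card (E k m v w) = card (E (k - 1) m (v + 1) w)"
proof (cases "w - v + 2 * m < 0")
  case True
  assume "1 \<le> v" "2 \<le> k"
  then show ?thesis using True E_len_neg[of w v m] E_len_neg[of w "v+1" m] by simp
next
  case False
  assume "1 \<le> v" "2 \<le> k"
  then show ?thesis using E_shift1[of "nat (w - v + 2 * m)"] False by simp
qed

lemma E_shift: "1 \<le> v \<Longrightarrow> int t < k \<Longrightarrow> card (E k m v w) = card (E (k - int t) m (v + int t) w)"
proof (induction t)
  case 0 then show ?case by simp
next
  case (Suc t)
  then have "card (E k m v w) = card (E (k - int t) m (v + int t) w)" by simp
  also have "\<dots> = card (E (k - int t - 1) m (v + int t + 1) w)"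
    by (rule E_shift1') (use Suc.prems in auto)
  finally show ?case by (simp add: algebra_simps)
qed


lemma ib_zero: "N < 0 \<or> j < 0 \<or> N < j \<Longrightarrow> ibinom N j = 0"
  unfolding ibinom_def by auto

lemma ib_alt: "0 \<le> a \<Longrightarrow> 0 \<le> b \<Longrightarrow> ibinom a b = nat a choose nat b"
  unfolding ibinom_def by (auto simp: binomial_eq_0)

lemma ib_pascal:
  assumes "1 \<le> N"
  shows "int (ibinom N j) = int (ibinom (N - 1) j) + int (ibinom (N - 1) (j - 1))"
proof -
  obtain n where n: "N = int (Suc n)"
  proof
    show "N = int (Suc (nat (N - 1)))" using assms by simp
  qed
  show ?thesis
  proof (cases "j < 0")
    case True then show ?thesis by (simp add: ib_zero)
  next
    case False
    show ?thesis
    proof (cases "j = 0")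
      case True then show ?thesis using n by (simp add: ibinom_def)
    next
      case False
      obtain i where i: "j = int (Suc i)"
      proof
        show "j = int (Suc (nat (j - 1)))" using False \<open>\<not> j < 0\<close> by simp
      qed
      have "(Suc n choose Suc i) = (n choose i) + (n choose Suc i)" by simp
      moreover have "ibinom N j = nat N choose nat j" by (rule ib_alt) (use n i in simp_all)
      moreover have "ibinom (N - 1) j = nat (N - 1) choose nat j" by (rule ib_alt) (use n i in simp_all)
      moreover have "ibinom (N - 1) (j - 1) = nat (N - 1) choose nat (j - 1)" by (rule ib_alt) (use n i in simp_all)
      moreover have "nat N = Suc n" "nat (N - 1) = n" "nat j = Suc i" "nat (j - 1) = i" using n i by simp_all
      ultimately show ?thesis by simp
    qed
  qed
qed

lemma ib_sym: "0 \<le> j \<Longrightarrow> j \<le> N \<Longrightarrow> ibinom N j = ibinom N (N - j)"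
  unfolding ibinom_def using binomial_symmetric[of "nat j" "nat N"] by (simp add: nat_diff_distrib)

definition g :: "int \<Rightarrow> int \<Rightarrow> int" where
  "g m v = (if v = 1 then (if m = 0 then 1 else 0)
      else int (ibinom (2 * m - v) (m - 1)) - int (ibinom (2 * m - v) m))"

lemma g_rec:
  assumes "2 \<le> v" "0 \<le> 2 * m - v"
  shows "g m v = g m (v + 1) + g (m - 1) (v - 1)"
proof (cases "v = 2")
  case True
  show ?thesis
  proof (cases "m = 1")
    case True
    then show ?thesis using \<open>v = 2\<close> by (simp add: g_def ibinom_def)
  next
    case False
    then have m2: "2 \<le> m" using assms True by simp
    have p1: "int (ibinom (2*m-2) (m-1)) = int (ibinom (2*m-3) (m-1)) + int (ibinom (2*m-3) (m-2))"
      using ib_pascal[of "2*m-2" "m-1"] m2 by simp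
    have p2: "int (ibinom (2*m-2) m) = int (ibinom (2*m-3) m) + int (ibinom (2*m-3) (m-1))"
      using ib_pascal[of "2*m-2" "m"] m2 by simp
    have sy: "ibinom (2*m-3) (m-2) = ibinom (2*m-3) (m-1)"
      using ib_sym[of "m-2" "2*m-3"] m2 by (simp add: algebra_simps)
    show ?thesis using True False p1 p2 sy by (simp add: g_def algebra_simps)
  qed
next
  case False
  then have v3: "3 \<le> v" using assms by simp
  show ?thesis
  proof (cases "2 * m - v = 0")
    case True
    then have "2 \<le> m" using v3 by simp
    then show ?thesis using True v3 by (simp add: g_def ib_zero algebra_simps)
  next
    case False
    then have N1: "1 \<le> 2 * m - v" using assms by simp
    have p1: "int (ibinom (2*m-v) (m-1)) = int (ibinom (2*m-v-1) (m-1)) + int (ibinom (2*m-v-1) (m-2))"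
      using ib_pascal[OF N1, of "m-1"] by simp
    have p2: "int (ibinom (2*m-v) m) = int (ibinom (2*m-v-1) m) + int (ibinom (2*m-v-1) (m-1))"
      using ib_pascal[OF N1, of "m"] by simp
    have e1: "2 * m - (v + 1) = 2*m-v-1" and e2: "2 * (m - 1) - (v - 1) = 2*m-v-1"
      and e3: "m - 1 - 1 = m - 2" by simp_all
    show ?thesis using v3 p1 p2 unfolding g_def by (simp only: e1 e2 e3) simp
  qed
qed

lemma E0_empty: "E 0 m v 1 = {}"
proof -
  have "False" if "ss \<in> E 0 m v 1" for ss
  proof -
    have l: "last (rw v ss) = 1" and c: "length (filter (\<lambda>x. x = 1) (rw v ss)) = 0"
      using that unfolding E_def by auto
    have "1 \<in> set (rw v ss)" using l last_in_set[OF rw_ne[of v ss]] by simp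
    then show False using c by (auto simp: filter_empty_conv)
  qed
  then show ?thesis by blast
qed

lemma E_v1: "card (E 1 m 1 1) = (if m = 0 then 1 else 0)"
  using E_card_split[of 1 1 m 1] E0_empty E_low[of 0] by simp

lemma E_main:
  "\<forall>m v. 2 * m - v + 1 = int n \<longrightarrow> 2 \<le> v \<longrightarrow> int (card (E 1 m v 1)) = g m v"
proof (induction n)
  case 0
  show ?case
  proof (intro allI impI)
    fix m v :: int
    assume a: "2 * m - v + 1 = int 0" "2 \<le> v"
    have "ss = []" if "ss \<in> E 1 m v 1" for ss using E_len[OF that] a by (cases ss) auto
    moreover have "[] \<notin> E 1 m v 1" using a by (auto simp: E_def)
    ultimately have "E 1 m v 1 = {}" by blast
    then show "int (card (E 1 m v 1)) = g m v" using a by (simp add: g_def ib_zero)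
  qed
next
  case (Suc n)
  show ?case
  proof (intro allI impI)
    fix m v :: int
    assume a: "2 * m - v + 1 = int (Suc n)" "2 \<le> v"
    have "card (E 1 m v 1) = card (E 1 m (v + 1) 1) + card (E 1 (m - 1) (v - 1) 1)"
      using E_card_split[of v 1 m 1] a by simp
    moreover have "int (card (E 1 m (v + 1) 1)) = g m (v + 1)"
      using Suc.IH[rule_format, of m "v + 1"] a by simp
    moreover have "int (card (E 1 (m - 1) (v - 1) 1)) = g (m - 1) (v - 1)"
    proof (cases "v = 2")
      case True
      then show ?thesis using E_v1[of "m - 1"] by (simp add: g_def)
    next
      case False
      then show ?thesis using Suc.IH[rule_format, of "m - 1" "v - 1"] a by simp
    qed
    moreover have "g m v = g m (v + 1) + g (m - 1) (v - 1)" by (rule g_rec) (use a in simp_all)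
    ultimately show "int (card (E 1 m v 1)) = g m v" by simp
  qed
qed

lemma E_main': "2 \<le> v \<Longrightarrow> int (card (E 1 m v 1)) = g m v"
proof (cases "2 * m - v + 1 < 0")
  case True
  assume "2 \<le> v"
  then show ?thesis using True E_len_neg[of 1 v m] by (simp add: g_def ib_zero)
next
  case False
  assume "2 \<le> v"
  then show ?thesis using E_main[of "nat (2 * m - v + 1)"] False by simp
qed

lemma binom_step: "(n choose Suc i) * Suc i = (n choose i) * (n - i)"
  using binomial_absorption[of i n] binomial_absorb_comp[of n i] by (simp add: mult.commute)

lemma g_closed:
  assumes "2 \<le> k" "1 \<le> m"
  shows "g m k * m = int (ibinom (2 * m - k) (m - k + 1)) * (k - 1)"
proof -
  let ?N = "2 * m - k" and ?j = "m - k + 1"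
  have gk: "g m k = int (ibinom ?N (m - 1)) - int (ibinom ?N m)" using assms by (simp add: g_def)
  show ?thesis
  proof (cases "?N < 0 \<or> ?j < 0")
    case True
    then show ?thesis using gk by (auto simp: ib_zero)
  next
    case False
    then have N0: "0 \<le> ?N" and j0: "0 \<le> ?j" by auto
    have s1: "ibinom ?N (m - 1) = ibinom ?N ?j"
      using ib_sym[of "m - 1" ?N] assms j0 by (simp add: algebra_simps)
    show ?thesis
    proof (cases "?j = 0")
      case True
      then have "ibinom ?N m = 0" by (simp add: ib_zero)
      moreover have "k - 1 = m" using True by simp
      ultimately show ?thesis using gk s1 True by simp
    next
      case False
      then have j1: "1 \<le> ?j" using j0 by simp
      have s2: "ibinom ?N m = ibinom ?N (?j - 1)"
        using ib_sym[of "m" ?N] assms j1 by (simp add: algebra_simps)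
      obtain n i where n: "nat ?N = n" and i: "nat (?j - 1) = i" by blast
      have ji: "nat ?j = Suc i" using i j1 by simp
      have "(n choose Suc i) * Suc i = (n choose i) * (n - i)" by (rule binom_step)
      then have "int (n choose Suc i) * int (Suc i) = int (n choose i) * int (n - i)"
        by (metis of_nat_mult)
      moreover have "int (n - i) = m" using n i j1 assms by simp
      moreover have "int (Suc i) = ?j" using i j1 by simp
      moreover have "ibinom ?N ?j = n choose Suc i" using n ji N0 j0 by (simp add: ib_alt)
      moreover have "ibinom ?N (?j - 1) = n choose i" using n i N0 j1 by (simp add: ib_alt)
      ultimately have A: "int (ibinom ?N ?j) * ?j = int (ibinom ?N (?j - 1)) * m"
        and G: "g m k = int (ibinom ?N ?j) - int (ibinom ?N (?j - 1))"
        using gk s1 s2 by (simp_all add: add.commute)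
      have "g m k * m = int (ibinom ?N ?j) * m - int (ibinom ?N (?j - 1)) * m"
        unfolding G by (rule left_diff_distrib)
      also have "\<dots> = int (ibinom ?N ?j) * m - int (ibinom ?N ?j) * ?j" using A by simp
      also have "\<dots> = int (ibinom ?N ?j) * (m - ?j)" by (rule right_diff_distrib[symmetric])
      also have "m - ?j = k - 1" by simp
      finally show ?thesis .
    qed
  qed
qed


theorem lemma5p2:
  fixes u v u' v' t j k :: int
  assumes "inA (u, v)" and "inA (u', v')"
    and "1 \<le> t" and "t < k" and "u' \<le> u" and "j \<le> - u"
  shows "dcount k (u + j) v (u' + j) v' = dcount k u v u' v'
    \<and> dcount k 0 1 u' v' = dcount k 0 v' (u' - v' + 1) 1
    \<and> dcount k u v u' v' = dcount (k - t) u (v + t) u' v'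
    \<and> (u' < 0 \<longrightarrow>
         real (dcount k 0 1 u' 1) = real (ibinom (- 2 * u' - k) (- u' - k + 1)) * real_of_int (k - 1) / real_of_int (- u'))"
proof -
  have u0: "u \<le> 0" and v1: "1 \<le> v" and u'0: "u' \<le> 0" and v'1: "1 \<le> v'"
    using assms(1,2) by (auto simp: inA_def)
  have dc: "\<And>k a b a' b'. a \<le> 0 \<Longrightarrow> dcount k a b a' b' = card (E k (a - a') b b')"
    unfolding dcount_def by (simp add: Dpaths_eq)
  have i: "dcount k (u + j) v (u' + j) v' = dcount k u v u' v'"
    using dc[of "u + j"] dc[of u] u0 assms(6) by simp
  have ii: "dcount k 0 1 u' v' = dcount k 0 v' (u' - v' + 1) 1"
    using dc[of 0 k 1 u' v'] dc[of 0 k v' "u' - v' + 1" 1] E_rev_card[of k "0 - u'" 1 v']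
    by (simp add: algebra_simps)
  have iii: "dcount k u v u' v' = dcount (k - t) u (v + t) u' v'"
    using dc[of u] u0 E_shift[OF v1, of "nat t" k "u - u'" v'] assms(3,4) by simp
  have iv: "real (dcount k 0 1 u' 1) = real (ibinom (- 2 * u' - k) (- u' - k + 1)) * real_of_int (k - 1) / real_of_int (- u')"
    if neg: "u' < 0"
  proof -
    have "dcount k 0 1 u' 1 = card (E k (- u') 1 1)" using dc[of 0] by simp
    also have "\<dots> = card (E (k - int (nat (k - 1))) (- u') (1 + int (nat (k - 1))) 1)"
      by (rule E_shift) (use assms(3,4) in simp_all)
    also have "\<dots> = card (E 1 (- u') k 1)" using assms(3,4) by simp
    finally have c: "int (dcount k 0 1 u' 1) = g (- u') k"
      using E_main'[of k "- u'"] assms(3,4) by simp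
    have gc: "g (- u') k * (- u') = int (ibinom (2 * (- u') - k) (- u' - k + 1)) * (k - 1)"
      by (rule g_closed) (use assms(3,4) neg in simp_all)
    have "real_of_int (int (dcount k 0 1 u' 1)) * real_of_int (- u')
        = real_of_int (int (ibinom (- 2 * u' - k) (- u' - k + 1))) * real_of_int (k - 1)"
      using c gc by (metis of_int_mult mult_minus_left mult_minus_right)
    then have "real (dcount k 0 1 u' 1) * real_of_int (- u')
        = real (ibinom (- 2 * u' - k) (- u' - k + 1)) * real_of_int (k - 1)" by simp
    moreover have "real_of_int (- u') \<noteq> 0" using neg by simp
    ultimately show ?thesis by (simp add: field_simps)
  qed
  show ?thesis using i ii iii iv by blast
qed

end
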